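(* Let $P,Q\in\mathrm{Mat}_d(\mathbb{Q})$. Then $P,Q$ are irreducible if and only if $P$ and $Q$ are invertible and the characteristic polynomial of $P^{-1}Q$ is irreducible over $\mathbb{Q}$.
   Context: Matrices $P,Q\in\mathrm{Mat}_d(\mathbb{Q})$ are called irreducible if there are no non-trivial subspaces $U,V$ of $\mathbb{Q}^d$ of the same dimension (non-trivial meaning neither $\{0\}$ nor $\mathbb{Q}^d$) such that $PU\subseteq V$ and $QU\subseteq V$. *)

theory Defs
  imports "HOL-Analysis.Analysis" "HOL-Computational_Algebra.Polynomial_Factorial"
begin

text \<open>Characteristic polynomial det(X I - A) of a square matrix over a commutative ring.\<close>
definition charpoly :: "'a::comm_ring_1 ^'n ^'n \<Rightarrow> 'a poly" where
  "charpoly A = det (\<chi> i j. (if i = j then [:0, 1:] else 0) - [:A $ i $ j:])"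

text \<open>The pair (P,Q) of d x d rational matrices is irreducible: there are no
  subspaces U, V of Q^d of the same dimension, both different from {0} and Q^d,
  with P U \<subseteq> V and Q U \<subseteq> V.\<close>
definition irreducible_pair :: "rat ^'d ^'d \<Rightarrow> rat ^'d ^'d \<Rightarrow> bool" where
  "irreducible_pair P Q \<longleftrightarrow>
     \<not> (\<exists>U V :: (rat ^'d) set.
           vec.subspace U \<and> vec.subspace V \<and> vec.dim U = vec.dim V \<and>
           U \<noteq> {0} \<and> U \<noteq> UNIV \<and> V \<noteq> {0} \<and> V \<noteq> UNIV \<and>
           (\<lambda>x. P *v x) ` U \<subseteq> V \<and> (\<lambda>x. Q *v x) ` U \<subseteq> V)"

end

theory Submission
  imports Defs "HOL-Computational_Algebra.Field_as_Ring"
begin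

definition pw :: "'a::field^'n^'n \<Rightarrow> nat \<Rightarrow> 'a^'n \<Rightarrow> 'a^'n" where
  "pw A i w = (((*v) A) ^^ i) w"

definition pe :: "'a::field^'n^'n \<Rightarrow> 'a poly \<Rightarrow> 'a^'n \<Rightarrow> 'a^'n" where
  "pe A p w = (\<Sum>i\<le>degree p. coeff p i *s pw A i w)"

lemma pw_0[simp]: "pw A 0 w = w" by (simp add: pw_def)
lemma pw_Suc: "pw A (Suc i) w = A *v pw A i w" by (simp add: pw_def)

lemma pe_bound:
  assumes "degree p \<le> n"
  shows "pe A p w = (\<Sum>i\<le>n. coeff p i *s pw A i w)"
  unfolding pe_def using assms
  by (intro sum.mono_neutral_left) (auto simp: coeff_eq_0)

lemma pe_0[simp]: "pe A 0 w = 0" by (simp add: pe_def)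

lemma pe_const: "pe A [:c:] w = c *s w" by (simp add: pe_def)

lemma pe_pCons: "pe A (pCons a p) w = a *s w + A *v pe A p w"
proof -
  have "pe A (pCons a p) w = (\<Sum>i\<le>Suc (degree p). coeff (pCons a p) i *s pw A i w)"
    by (rule pe_bound) (simp add: degree_pCons_le)
  also have "\<dots> = a *s w + (\<Sum>i\<le>degree p. coeff p i *s (A *v pw A i w))"
    by (subst sum.atMost_Suc_shift) (simp add: pw_Suc)
  also have "(\<Sum>i\<le>degree p. coeff p i *s (A *v pw A i w)) = A *v pe A p w"
    by (simp add: pe_def vec.sum vec.scale)
  finally show ?thesis .
qed

lemma pe_add: "pe A (p + q) w = pe A p w + pe A q w"
proof -
  let ?n = "max (degree p) (degree q)"
  have "pe A (p + q) w = (\<Sum>i\<le>?n. coeff (p+q) i *s pw A i w)"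
    by (rule pe_bound) (simp add: degree_add_le)
  also have "\<dots> = (\<Sum>i\<le>?n. coeff p i *s pw A i w) + (\<Sum>i\<le>?n. coeff q i *s pw A i w)"
    by (simp add: sum.distrib vec.scale_left_distrib)
  also have "\<dots> = pe A p w + pe A q w"
    using pe_bound[of p ?n A w] pe_bound[of q ?n A w] by simp
  finally show ?thesis .
qed

lemma pe_smult: "pe A (smult c p) w = c *s pe A p w"
proof -
  have "pe A (smult c p) w = (\<Sum>i\<le>degree p. coeff (smult c p) i *s pw A i w)"
    by (rule pe_bound) simp
  also have "\<dots> = c *s pe A p w"
    by (simp add: pe_def vec.scale_sum_right)
  finally show ?thesis .
qed

lemma pe_diff: "pe A (p - q) w = pe A p w - pe A q w"
  using pe_add[of A "p - q" q w] by simp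

lemma pe_mult: "pe A (p * q) w = pe A p (pe A q w)"
proof (induct p rule: pCons_induct)
  case 0
  then show ?case by simp
next
  case (pCons a p)
  then show ?case
    by (simp add: pe_add pe_smult pe_pCons)
qed

lemma pe_monom: "pe A (monom c n) w = c *s pw A n w"
proof -
  have "pe A (monom c n) w = (\<Sum>i\<le>n. coeff (monom c n) i *s pw A i w)"
    by (rule pe_bound) (simp add: degree_monom_le)
  also have "\<dots> = (\<Sum>i\<le>n. (if n = i then c *s pw A i w else 0))"
    by (intro sum.cong) (auto simp: coeff_monom)
  also have "\<dots> = c *s pw A n w"
    by (simp add: sum.delta')
  finally show ?thesis .
qed


lemma pw_in:
  assumes "\<forall>x\<in>U. A *v x \<in> U" "u \<in> U"
  shows "pw A i u \<in> U"
  using assms by (induct i) (auto simp: pw_Suc)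

lemma annih:
  fixes A :: "'a::field^'n^'n"
  assumes sub: "vec.subspace U" and inv: "\<forall>x\<in>U. A *v x \<in> U" and u: "u \<in> U"
  shows "\<exists>h. h \<noteq> 0 \<and> degree h \<le> vec.dim U \<and> pe A h u = 0"
proof -
  define k where "k = vec.dim U"
  define g where "g = (\<lambda>i. pw A i u)"
  have gU: "g i \<in> U" for i unfolding g_def using pw_in[OF inv u] .
  show ?thesis
  proof (cases "inj_on g {..k}")
    case False
    then obtain i j where ij: "i \<le> k" "j \<le> k" "i \<noteq> j" "g i = g j"
      unfolding inj_on_def by auto
    then obtain a b where ab: "a < b" "b \<le> k" "g a = g b"
      by (metis linorder_neqE_nat)
    define h :: "'a poly" where "h = monom 1 b - monom 1 a"
    have "coeff h b = 1" using ab by (simp add: h_def coeff_monom)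
    hence "h \<noteq> 0" by auto
    moreover have "degree h \<le> k"
      unfolding h_def using ab
      by (intro order.trans[OF degree_diff_le_max]) (auto simp: degree_monom_le intro: order.trans[OF degree_monom_le])
    moreover have "pe A h u = 0"
      unfolding h_def pe_diff pe_monom using ab by (simp add: g_def)
    ultimately show ?thesis unfolding k_def by blast
  next
    case True
    define S where "S = g ` {..k}"
    have cardS: "card S = Suc k" unfolding S_def using True by (simp add: card_image)
    have SU: "S \<subseteq> U" unfolding S_def using gU by auto
    have finS: "finite S" unfolding S_def by simp
    have "vec.dependent S"
    proof (rule ccontr)
      assume "\<not> vec.dependent S"
      from vec.independent_card_le_dim[OF SU this] cardS show False unfolding k_def by simp
    qed
    then obtain c where c: "\<exists>v\<in>S. c v \<noteq> 0" "(\<Sum>v\<in>S. c v *s v) = 0"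
      using vec.dependent_finite[OF finS] by auto
    define h :: "'a poly" where "h = (\<Sum>i\<le>k. monom (c (g i)) i)"
    have ch: "coeff h j = (if j \<le> k then c (g j) else 0)" for j
    proof -
      have "coeff h j = (\<Sum>i\<le>k. if i = j then c (g i) else 0)"
        unfolding h_def coeff_sum by (intro sum.cong) (auto simp: coeff_monom)
      also have "\<dots> = (if j \<le> k then c (g j) else 0)"
        by (simp add: sum.delta)
      finally show ?thesis .
    qed
    have dh: "degree h \<le> k" by (rule degree_le) (simp add: ch)
    have "pe A h u = (\<Sum>i\<le>k. coeff h i *s g i)"
      unfolding g_def by (rule pe_bound[OF dh])
    also have "\<dots> = (\<Sum>i\<le>k. c (g i) *s g i)" by (simp add: ch)
    also have "\<dots> = (\<Sum>v\<in>S. c v *s v)"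
      unfolding S_def by (subst sum.reindex[OF True]) simp
    also have "\<dots> = 0" by (rule c(2))
    finally have pe0: "pe A h u = 0" .
    from c(1) obtain j where j: "j \<le> k" "c (g j) \<noteq> 0" unfolding S_def by auto
    hence "coeff h j \<noteq> 0" by (simp add: ch)
    hence "h \<noteq> 0" by auto
    with dh pe0 show ?thesis unfolding k_def by blast
  qed
qed

lemma irr_factor:
  fixes A :: "rat^'n^'n"
  shows "h \<noteq> 0 \<Longrightarrow> pe A h u = 0 \<Longrightarrow> u \<noteq> 0 \<Longrightarrow>
     \<exists>p w. irreducible p \<and> p dvd h \<and> w \<noteq> 0 \<and> pe A p w = 0"
proof (induct "degree h" arbitrary: h u rule: less_induct)
  case less
  have nu: "\<not> is_unit h"
  proof
    assume "is_unit h"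
    hence "degree h = 0" using less.prems(1) by (simp add: is_unit_iff_degree)
    hence "pe A h u = coeff h 0 *s u" using pe_bound[of h 0 A u] by simp
    moreover have "coeff h 0 \<noteq> 0" using \<open>degree h = 0\<close> less.prems(1)
      by (metis leading_coeff_0_iff)
    ultimately show False using less.prems by (simp add: vec.scale_eq_0_iff)
  qed
  obtain b where b: "b dvd h" "prime b" using prime_divisor_exists[OF less.prems(1) nu] by auto
  then obtain q where hq: "h = b * q" by (auto elim: dvdE)
  have irrb: "irreducible b" using b(2) by (simp add: prime_elem_imp_irreducible)
  have b0: "b \<noteq> 0" and bu: "\<not> is_unit b" using irrb by (auto simp: irreducible_def)
  have q0: "q \<noteq> 0" using hq less.prems(1) by auto
  have degb: "degree b > 0" using b0 bu by (simp add: is_unit_iff_degree)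
  show ?case
  proof (cases "pe A q u = 0")
    case True
    have "degree q < degree h" using hq b0 q0 degb by (simp add: degree_mult_eq)
    from less.hyps[OF this q0 True less.prems(3)] obtain p w where
      "irreducible p" "p dvd q" "w \<noteq> 0" "pe A p w = 0" by blast
    then show ?thesis using hq by (auto intro: dvd_mult_right)
  next
    case False
    have "pe A b (pe A q u) = 0" using less.prems(2) hq by (simp add: pe_mult)
    then show ?thesis using irrb b(1) False by blast
  qed
qed


lemma cramer_ring:
  fixes M :: "'a::comm_ring_1^'n^'n"
  shows "det (\<chi> i. if i = k then M *v x else row i (transpose M)) = x$k * det M"
proof -
  let ?T = "transpose M"
  have Mx: "M *v x = (\<Sum>j\<in>UNIV. x$j *s row j ?T)"
    by (simp add: vec_eq_iff matrix_vector_mult_def row_def transpose_def sum_component mult.commute)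
  have "det (\<chi> i. if i = k then M *v x else row i ?T)
      = (\<Sum>j\<in>UNIV. det (\<chi> i. if i = k then x$j *s row j ?T else row i ?T))"
    unfolding Mx by (rule det_linear_row_sum) simp
  also have "\<dots> = (\<Sum>j\<in>UNIV. x$j * det (\<chi> i. if i = k then row j ?T else row i ?T))"
    by (simp add: det_row_mul)
  also have "\<dots> = (\<Sum>j\<in>UNIV. if j = k then x$k * det M else 0)"
  proof (intro sum.cong refl)
    fix j
    show "x$j * det (\<chi> i. if i = k then row j ?T else row i ?T) = (if j = k then x$k * det M else 0)"
    proof (cases "j = k")
      case True
      have "(\<chi> i. if i = k then row j ?T else row i ?T) = ?T"
        using True by (simp add: vec_eq_iff row_def)
      then show ?thesis using True by simp
    next
      case False
      have "det (\<chi> i. if i = k then row j ?T else row i ?T) = 0"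
        by (rule det_identical_rows[of k j]) (use False in \<open>auto simp: row_def vec_eq_iff\<close>)
      then show ?thesis using False by simp
    qed
  qed
  also have "\<dots> = x$k * det M" by simp
  finally show ?thesis .
qed

definition NN :: "'a::field^'n^'n \<Rightarrow> 'a poly^'n^'n" where
  "NN A = (\<chi> i j. (if i = j then [:0, 1:] else 0) - [:A $ i $ j:])"

lemma charpoly_NN: "charpoly A = det (NN A)"
  by (simp add: charpoly_def NN_def)

lemma deg_entry: "degree (NN A $ i $ j) \<le> (if j = i then 1 else 0)"
  by (auto simp: NN_def degree_diff_le)

lemma ofint_mult_poly: "(of_int k :: 'a::field poly) * q = smult (of_int k) q"
  by (simp add: of_int_poly)

lemma deg_term:
  fixes A :: "'a::field^'n^'n"
  shows "degree (\<Prod>i\<in>UNIV. NN A $ i $ p i) \<le> CARD('n)"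
    and "p \<noteq> id \<Longrightarrow> degree (\<Prod>i\<in>UNIV. NN A $ i $ p i) < CARD('n)"
proof -
  have "degree (\<Prod>i\<in>UNIV. NN A $ i $ p i) \<le> (\<Sum>i\<in>UNIV. degree (NN A $ i $ p i))"
    using degree_prod_sum_le[of UNIV "\<lambda>i. NN A $ i $ p i"] by (simp add: o_def)
  also have "\<dots> \<le> (\<Sum>i\<in>UNIV. (if p i = i then 1 else 0))"
  proof (intro sum_mono)
    fix i show "degree (NN A $ i $ p i) \<le> (if p i = i then 1 else 0)"
      using deg_entry[of A i "p i"] by (cases "p i = i") auto
  qed
  finally have le: "degree (\<Prod>i\<in>UNIV. NN A $ i $ p i) \<le> (\<Sum>i\<in>UNIV. (if p i = i then 1 else 0::nat))" .
  have "(\<Sum>i\<in>UNIV. (if p i = i then 1 else 0::nat)) \<le> (\<Sum>i\<in>(UNIV::'n set). 1)"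
    by (intro sum_mono) auto
  with le show "degree (\<Prod>i\<in>UNIV. NN A $ i $ p i) \<le> CARD('n)" by simp
  assume "p \<noteq> id"
  then obtain i0 where i0: "p i0 \<noteq> i0" by (auto simp: fun_eq_iff)
  have "(\<Sum>i\<in>UNIV. (if p i = i then 1 else 0::nat)) = (\<Sum>i\<in>UNIV - {i0}. (if p i = i then 1 else 0::nat))"
    using i0 by (subst sum.remove[of UNIV i0]) auto
  also have "\<dots> \<le> (\<Sum>i\<in>(UNIV::'n set) - {i0}. 1)"
    by (intro sum_mono) auto
  also have "\<dots> < CARD('n)" by (simp add: card_Diff_singleton)
  finally show "degree (\<Prod>i\<in>UNIV. NN A $ i $ p i) < CARD('n)" using le by linarith
qed

lemma charpoly_degree:
  fixes A :: "'a::field^'n^'n"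
  shows "degree (charpoly A) = CARD('n)"
proof -
  let ?t = "\<lambda>p. of_int (sign p) * (\<Prod>i\<in>UNIV. NN A $ i $ p i)"
  have cp: "charpoly A = (\<Sum>p\<in>{p. p permutes (UNIV::'n set)}. ?t p)"
    unfolding charpoly_NN det_def ..
  have degt: "degree (?t p) \<le> CARD('n)" for p
    unfolding ofint_mult_poly using deg_term(1)[of A p] by (simp add: degree_smult_le order.trans)
  have "degree (charpoly A) \<le> CARD('n)"
    unfolding cp by (rule degree_sum_le) (auto intro: degt)
  moreover have "coeff (charpoly A) CARD('n) = 1"
  proof -
    have "coeff (charpoly A) CARD('n) = (\<Sum>p\<in>{p. p permutes (UNIV::'n set)}. coeff (?t p) CARD('n))"
      unfolding cp coeff_sum ..
    also have "\<dots> = (\<Sum>p\<in>{id}. coeff (?t p) CARD('n))"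
    proof (rule sum.mono_neutral_right)
      show "finite {p. p permutes (UNIV::'n set)}" by (simp add: finite_permutations)
      show "{id} \<subseteq> {p. p permutes (UNIV::'n set)}" by (simp add: permutes_id)
      show "\<forall>p\<in>{p. p permutes (UNIV::'n set)} - {id}. coeff (?t p) CARD('n) = 0"
        using deg_term(2)[of _ A] by (auto simp: ofint_mult_poly coeff_eq_0)
    qed
    also have "\<dots> = coeff (\<Prod>i\<in>UNIV. NN A $ i $ i) CARD('n)"
      by (simp add: sign_id)
    also have "\<dots> = 1"
    proof -
      have ent: "NN A $ i $ i = [:- (A$i$i), 1:]" for i by (simp add: NN_def)
      have "degree (\<Prod>i\<in>UNIV. NN A $ i $ i) = CARD('n)"
        unfolding ent by (subst degree_prod_eq_sum_degree) auto
      moreover have "lead_coeff (\<Prod>i\<in>UNIV. NN A $ i $ i) = 1"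
        unfolding ent lead_coeff_prod by simp
      ultimately show ?thesis by simp
    qed
    finally show ?thesis .
  qed
  hence "CARD('n) \<le> degree (charpoly A)" by (intro le_degree) simp
  ultimately show ?thesis by simp
qed


definition cv :: "'a::zero^'n \<Rightarrow> 'a poly^'n" where
  "cv w = (\<chi> k. [:w$k:])"

lemma cv_0[simp]: "cv 0 = 0" by (simp add: cv_def vec_eq_iff)

lemma const_add: "[:a + b:] = [:a:] + [:b::'a::comm_monoid_add:]" by simp
lemma const_mult: "[:a * b:] = [:a:] * [:b::'a::comm_ring_1:]" by simp

lemma const_sum: "[:sum f S:] = (\<Sum>x\<in>S. [:f x:])"
proof (induct S rule: infinite_finite_induct)
  case (insert x F)
  then show ?case by (simp only: sum.insert const_add insert.hyps)
qed simp_all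

lemma mv_smult: "(M::'a::comm_ring_1^'n^'m) *v (c *s x) = c *s (M *v x)"
  by (simp add: vec_eq_iff matrix_vector_mult_def sum_distrib_left algebra_simps)

lemma NN_cv: "NN A *v cv u = [:0,1:] *s cv u - cv (A *v u)"
proof -
  have "(NN A *v cv u) $ i = ([:0,1:] *s cv u - cv (A *v u)) $ i" for i
  proof -
    have "(NN A *v cv u) $ i = (\<Sum>j\<in>UNIV. ((if i = j then [:0,1:] else 0) - [:A$i$j:]) * [:u$j:])"
      by (simp add: matrix_vector_mult_def NN_def cv_def)
    also have "\<dots> = (\<Sum>j\<in>UNIV. (if i = j then [:0,1:] * [:u$j:] else 0)) - (\<Sum>j\<in>UNIV. [:A$i$j * u$j:])"
      unfolding sum_subtractf[symmetric] by (intro sum.cong refl) (auto simp: algebra_simps)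
    also have "\<dots> = [:0,1:] * [:u$i:] - [:(A *v u) $ i:]"
      by (simp add: matrix_vector_mult_def const_sum)
    finally show ?thesis by (simp add: cv_def)
  qed
  then show ?thesis by (simp add: vec_eq_iff)
qed

primrec Yl :: "'a::field^'n^'n \<Rightarrow> 'a^'n \<Rightarrow> 'a list \<Rightarrow> 'a poly^'n" where
  "Yl A w [] = 0"
| "Yl A w (a # as) = [:0,1:] *s Yl A w as + cv (pe A (Poly as) w)"

definition Y :: "'a::field^'n^'n \<Rightarrow> 'a^'n \<Rightarrow> 'a poly \<Rightarrow> 'a poly^'n" where
  "Y A w p = Yl A w (coeffs p)"

lemma Y_0[simp]: "Y A w 0 = 0" by (simp add: Y_def)

lemma Y_pCons: "Y A w (pCons a q) = [:0,1:] *s Y A w q + cv (pe A q w)"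
proof (cases "a = 0 \<and> q = 0")
  case True then show ?thesis by (simp add: Y_def)
next
  case False
  then have "coeffs (pCons a q) = a # coeffs q" by (auto simp: cCons_def)
  then show ?thesis by (simp add: Y_def)
qed

lemma poly_id: "[:0,1:] * (q * [:wk:] - [:ek:]) + ([:0,1:] * [:ek:] - [:fk:]) = pCons a q * [:wk:] - [:a*wk + (fk::'a::comm_ring_1):]"
proof -
  have pc: "pCons a q = [:a:] + [:0,1:] * q" by simp
  show ?thesis unfolding pc const_add const_mult by (simp add: algebra_simps)
qed

lemma Y_eq: "NN A *v Y A w p = p *s cv w - cv (pe A p w)"
proof (induct p rule: pCons_induct)
  case 0
  then show ?case by simp
next
  case (pCons a q)
  have "NN A *v Y A w (pCons a q) = [:0,1:] *s (NN A *v Y A w q) + NN A *v cv (pe A q w)"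
    by (simp add: Y_pCons matrix_vector_right_distrib mv_smult)
  also have "\<dots> = [:0,1:] *s (q *s cv w - cv (pe A q w)) + ([:0,1:] *s cv (pe A q w) - cv (A *v pe A q w))"
    by (simp add: pCons.hyps NN_cv)
  also have "\<dots> = pCons a q *s cv w - cv (pe A (pCons a q) w)"
  proof -
    have "([:0,1:] *s (q *s cv w - cv (pe A q w)) + ([:0,1:] *s cv (pe A q w) - cv (A *v pe A q w))) $ k
       = (pCons a q *s cv w - cv (pe A (pCons a q) w)) $ k" for k
    proof -
      have "([:0,1:] *s (q *s cv w - cv (pe A q w)) + ([:0,1:] *s cv (pe A q w) - cv (A *v pe A q w))) $ k
        = [:0,1:] * (q * [:w$k:] - [:pe A q w $ k:]) + ([:0,1:] * [:pe A q w $ k:] - [:(A *v pe A q w) $ k:])"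
        by (simp add: cv_def)
      also have "\<dots> = pCons a q * [:w$k:] - [:a * w$k + (A *v pe A q w) $ k:]"
        by (rule poly_id)
      also have "\<dots> = (pCons a q *s cv w - cv (pe A (pCons a q) w)) $ k"
        by (simp add: cv_def pe_pCons)
      finally show ?thesis .
    qed
    then show ?thesis by (simp add: vec_eq_iff)
  qed
  finally show ?case .
qed

lemma Y_deg:
  "degree (Y A w p $ k) \<le> degree p - 1 \<and>
   coeff (Y A w p $ k) (degree p - 1) = (if degree p = 0 then 0 else lead_coeff p * w $ k)"
proof (induct p rule: pCons_induct)
  case 0
  then show ?case by simp
next
  case (pCons a q)
  have Yk: "Y A w (pCons a q) $ k = pCons (pe A q w $ k) (Y A w q $ k)"
    by (simp add: Y_pCons cv_def)
  show ?case
  proof (cases "q = 0")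
    case True
    then show ?thesis by (simp add: Y_pCons)
  next
    case False
    have dp: "degree (pCons a q) = Suc (degree q)" using False by simp
    show ?thesis
    proof (cases "degree q = 0")
      case True
      have "degree (Y A w q $ k) = 0" "coeff (Y A w q $ k) 0 = 0"
        using pCons.hyps(2) True by auto
      then have "Y A w q $ k = 0" by (metis leading_coeff_0_iff)
      moreover have "pe A q w $ k = lead_coeff q * w $ k"
        using pe_bound[of q 0 A w] True by simp
      ultimately show ?thesis using dp True False by (simp add: Yk)
    next
      case False
      have "degree (Y A w (pCons a q) $ k) \<le> degree q"
        unfolding Yk using pCons.hyps(2) False
        by (metis (no_types, lifting) Suc_diff_1 Suc_le_mono bot_nat_0.not_eq_extremum degree_pCons_le le_trans)
      moreover have "coeff (Y A w (pCons a q) $ k) (degree q) = lead_coeff q * w $ k"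
        unfolding Yk using pCons.hyps(2) False
        by (metis Suc_diff_1 bot_nat_0.not_eq_extremum coeff_pCons_Suc)
      ultimately show ?thesis using dp \<open>q \<noteq> 0\<close> by simp
    qed
  qed
qed

lemma key:
  fixes A :: "rat^'n^'n"
  assumes irr: "irreducible p" and pe0: "pe A p w = 0" and w0: "w \<noteq> 0"
  shows "p dvd charpoly A"
proof (rule ccontr)
  assume nd: "\<not> p dvd charpoly A"
  let ?y = "Y A w p"
  have Ny: "NN A *v ?y = p *s cv w" using Y_eq[of A w p] pe0 by simp
  have pr: "prime_elem p" using irr by (simp add: prime_elem_iff_irreducible)
  have p0: "p \<noteq> 0" and pu: "\<not> is_unit p" using irr by (auto simp: irreducible_def)
  have dp: "degree p > 0" using p0 pu by (simp add: is_unit_iff_degree)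
  have "w $ k = 0" for k
  proof -
    have "?y $ k * charpoly A = det (\<chi> i. if i = k then NN A *v ?y else row i (transpose (NN A)))"
      by (simp add: cramer_ring charpoly_NN)
    also have "\<dots> = p * det (\<chi> i. if i = k then cv w else row i (transpose (NN A)))"
      unfolding Ny by (rule det_row_mul)
    finally have "p dvd ?y $ k * charpoly A" by auto
    with nd pr have dvd: "p dvd ?y $ k" by (simp add: prime_elem_dvd_mult_iff)
    have yk: "?y $ k = 0"
    proof (rule ccontr)
      assume "?y $ k \<noteq> 0"
      from dvd_imp_degree_le[OF dvd this] Y_deg[of A w p k] dp show False by linarith
    qed
    from Y_deg[of A w p k] yk dp have "lead_coeff p * w $ k = 0" by simp
    with p0 show ?thesis by simp
  qed
  hence "w = 0" by (simp add: vec_eq_iff)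
  with w0 show False by simp
qed


lemma dim_UNIV_cart: "vec.dim (UNIV :: ('a::field^'n) set) = CARD('n)"
  by (simp add: card_cart_basis)

lemma krylov:
  fixes A :: "'a::field^'n^'n"
  assumes pe0: "pe A p w = 0" and p0: "p \<noteq> 0" and w0: "w \<noteq> 0"
  shows "\<exists>W. vec.subspace W \<and> (\<forall>x\<in>W. A *v x \<in> W) \<and> w \<in> W \<and> vec.dim W \<le> degree p"
proof -
  define D where "D = degree p"
  define G where "G = (\<lambda>i. pw A i w) ` {..<D}"
  define W where "W = vec.span G"
  have D0: "D > 0"
  proof (rule ccontr)
    assume "\<not> D > 0"
    hence "D = 0" by simp
    hence "pe A p w = coeff p 0 *s w" using pe_bound[of p 0 A w] D_def by simp
    moreover have "coeff p 0 \<noteq> 0" using \<open>D = 0\<close> p0 D_def by (metis leading_coeff_0_iff)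
    ultimately show False using pe0 w0 by simp
  qed
  have wW: "w \<in> W" unfolding W_def G_def using D0
    by (intro vec.span_base) (auto intro!: image_eqI[of _ _ 0])
  have lc: "lead_coeff p \<noteq> 0" using p0 by simp
  have last: "pw A D w \<in> W"
  proof -
    have "0 = (\<Sum>i<Suc D. coeff p i *s pw A i w)"
      using pe0 unfolding pe_def D_def lessThan_Suc_atMost by simp
    also have "\<dots> = (\<Sum>i<D. coeff p i *s pw A i w) + lead_coeff p *s pw A D w"
      by (simp add: D_def)
    finally have eq: "lead_coeff p *s pw A D w = - (\<Sum>i<D. coeff p i *s pw A i w)"
      by (simp add: eq_neg_iff_add_eq_0 add.commute)
    have "- (\<Sum>i<D. coeff p i *s pw A i w) \<in> W"
      unfolding W_def G_def
      by (intro vec.span_neg vec.span_sum vec.span_scale vec.span_base) auto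
    hence "lead_coeff p *s pw A D w \<in> W" using eq by simp
    hence "(1 / lead_coeff p) *s (lead_coeff p *s pw A D w) \<in> W"
      unfolding W_def by (rule vec.span_scale)
    thus ?thesis using lc by simp
  qed
  have subW: "vec.subspace {x. A *v x \<in> W}"
    unfolding vec.subspace_def W_def
    by (auto simp: matrix_vector_right_distrib mv_smult intro: vec.span_add vec.span_scale vec.span_zero)
  have GW: "G \<subseteq> {x. A *v x \<in> W}"
  proof
    fix x assume "x \<in> G"
    then obtain i where i: "i < D" "x = pw A i w" unfolding G_def by auto
    have "A *v x = pw A (Suc i) w" using i by (simp add: pw_Suc)
    moreover have "pw A (Suc i) w \<in> W"
    proof (cases "Suc i < D")
      case True
      then show ?thesis unfolding W_def G_def by (intro vec.span_base) auto
    next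
      case False
      then have "Suc i = D" using i by simp
      then show ?thesis using last by simp
    qed
    ultimately show "x \<in> {x. A *v x \<in> W}" by simp
  qed
  have inv: "\<forall>x\<in>W. A *v x \<in> W"
    using vec.span_minimal[OF GW subW] unfolding W_def by auto
  have "vec.dim W \<le> card G"
    unfolding W_def by (rule vec.dim_le_card) (auto simp: G_def)
  also have "\<dots> \<le> D" unfolding G_def using card_image_le[of "{..<D}" "\<lambda>i. pw A i w"] by simp
  finally have "vec.dim W \<le> degree p" unfolding D_def .
  moreover have "vec.subspace W" unfolding W_def by simp
  ultimately show ?thesis using inv wW by blast
qed

lemma sing:
  fixes P Q :: "rat^'d^'d"
  assumes d2: "CARD('d) \<ge> 2" and v0: "v \<noteq> 0" and vk: "P *v v = 0 \<or> Q *v v = 0"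
  shows "\<not> irreducible_pair P Q"
proof -
  define z where "z = (if P *v v = 0 then (if Q *v v = 0 then v else Q *v v) else P *v v)"
  have z0: "z \<noteq> 0" using v0 by (simp add: z_def)
  have Pz: "P *v v \<in> vec.span {z}" and Qz: "Q *v v \<in> vec.span {z}"
    using vk by (auto simp: z_def vec.span_zero intro: vec.span_base)
  have dim1: "vec.dim (vec.span {x}) = 1" if "x \<noteq> (0::rat^'d)" for x
    using that by simp
  have nU: "vec.span {x} \<noteq> UNIV" if "x \<noteq> (0::rat^'d)" for x
  proof
    assume "vec.span {x} = UNIV"
    hence "vec.dim (UNIV::(rat^'d) set) = 1" using dim1[OF that] by simp
    with d2 show False using dim_UNIV_cart[where 'a=rat and 'n='d] by simp
  qed
  have n0: "vec.span {x} \<noteq> {0}" if "x \<noteq> (0::rat^'d)" for x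
    using that vec.span_base[of x "{x}"] by auto
  have img: "(\<lambda>x. M *v x) ` vec.span {v} \<subseteq> vec.span {z}" if "M *v v \<in> vec.span {z}" for M :: "rat^'d^'d"
  proof
    fix y assume "y \<in> (\<lambda>x. M *v x) ` vec.span {v}"
    then obtain c where "y = M *v (c *s v)" by (auto simp: vec.span_singleton)
    hence "y = c *s (M *v v)" by (simp add: mv_smult)
    thus "y \<in> vec.span {z}" using that by (simp add: vec.span_scale)
  qed
  show ?thesis
    unfolding irreducible_pair_def
    using dim1[OF v0] dim1[OF z0] nU[OF v0] nU[OF z0] n0[OF v0] n0[OF z0] img[OF Pz] img[OF Qz]
    by (metis vec.subspace_span)
qed

lemma matrix_inv_props:
  assumes "invertible (P::'a::semiring_1^'n^'n)"
  shows "P ** matrix_inv P = mat 1" "matrix_inv P ** P = mat 1"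
proof -
  from assms obtain A' where "P ** A' = mat 1 \<and> A' ** P = mat 1" unfolding invertible_def by blast
  hence "P ** matrix_inv P = mat 1 \<and> matrix_inv P ** P = mat 1"
    unfolding matrix_inv_def by (rule someI)
  thus "P ** matrix_inv P = mat 1" "matrix_inv P ** P = mat 1" by auto
qed

lemma inv_sub:
  fixes P Q :: "rat^'d^'d"
  assumes invP: "invertible P" and sub: "vec.subspace U"
    and inv: "\<forall>x\<in>U. (matrix_inv P ** Q) *v x \<in> U" and U0: "U \<noteq> {0}" and U1: "U \<noteq> UNIV"
  shows "\<not> irreducible_pair P Q"
proof -
  define V where "V = (\<lambda>x. P *v x) ` U"
  have injP: "inj ((*v) P)" by (rule inj_matrix_vector_mult[OF invP])
  have subV: "vec.subspace V" unfolding V_def using vec.subspace_image[OF sub] by simp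
  have dimV: "vec.dim V = vec.dim U"
    unfolding V_def using vec.dim_image_eq[OF matrix_vector_mul_linear_gen, of P U] injP
    by (simp add: inj_on_subset)
  from U0 sub obtain u where u: "u \<in> U" "u \<noteq> 0" by (auto simp: vec.subspace_def)
  have V0: "V \<noteq> {0}"
  proof
    assume "V = {0}"
    hence "P *v u = P *v 0" using u unfolding V_def by auto
    with injP u show False by (metis injD)
  qed
  have V1: "V \<noteq> UNIV"
  proof
    assume "V = UNIV"
    from U1 obtain y where y: "y \<notin> U" by auto
    have "P *v y \<in> V" using \<open>V = UNIV\<close> by simp
    then obtain x where "x \<in> U" "P *v y = P *v x" unfolding V_def by auto
    with injP y show False by (auto dest: injD)
  qed
  have PU: "(\<lambda>x. P *v x) ` U \<subseteq> V" unfolding V_def by simp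
  have QU: "(\<lambda>x. Q *v x) ` U \<subseteq> V"
  proof
    fix y assume "y \<in> (\<lambda>x. Q *v x) ` U"
    then obtain x where x: "x \<in> U" "y = Q *v x" by auto
    have "P *v ((matrix_inv P ** Q) *v x) = ((P ** matrix_inv P) ** Q) *v x"
      by (simp add: matrix_vector_mul_assoc matrix_mul_assoc)
    also have "\<dots> = Q *v x" by (simp add: matrix_inv_props[OF invP])
    finally show "y \<in> V" unfolding V_def using x inv by force
  qed
  show ?thesis unfolding irreducible_pair_def
    using sub subV dimV U0 U1 V0 V1 PU QU by metis
qed

lemma ip_to_inv:
  fixes P Q :: "rat^'d^'d"
  assumes invP: "invertible P" and nip: "\<not> irreducible_pair P Q"
  shows "\<exists>U. vec.subspace U \<and> (\<forall>x\<in>U. (matrix_inv P ** Q) *v x \<in> U) \<and> U \<noteq> {0} \<and> U \<noteq> UNIV"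
proof -
  from nip obtain U V where UV: "vec.subspace U" "vec.subspace V" "vec.dim U = vec.dim V"
    "U \<noteq> {0}" "U \<noteq> UNIV" "(\<lambda>x. P *v x) ` U \<subseteq> V" "(\<lambda>x. Q *v x) ` U \<subseteq> V"
    unfolding irreducible_pair_def by blast
  have injP: "inj ((*v) P)" by (rule inj_matrix_vector_mult[OF invP])
  have subPU: "vec.subspace ((\<lambda>x. P *v x) ` U)" using vec.subspace_image[OF UV(1)] by simp
  have dimPU: "vec.dim ((\<lambda>x. P *v x) ` U) = vec.dim U"
    using vec.dim_image_eq[OF matrix_vector_mul_linear_gen, of P U] injP
    by (simp add: inj_on_subset)
  have PUV: "(\<lambda>x. P *v x) ` U = V"
    using vec.subspace_dim_equal[OF subPU UV(2) UV(6)] dimPU UV(3) by simp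
  have "\<forall>x\<in>U. (matrix_inv P ** Q) *v x \<in> U"
  proof
    fix x assume x: "x \<in> U"
    then have "Q *v x \<in> V" using UV(7) by auto
    then obtain u where u: "u \<in> U" "Q *v x = P *v u" unfolding PUV[symmetric] by auto
    have "(matrix_inv P ** Q) *v x = matrix_inv P *v (P *v u)"
      by (simp add: matrix_vector_mul_assoc[symmetric] u(2))
    also have "\<dots> = u" by (simp add: matrix_vector_mul_assoc matrix_inv_props[OF invP])
    finally show "(matrix_inv P ** Q) *v x \<in> U" using u by simp
  qed
  with UV show ?thesis by blast
qed


lemma invertible_ker:
  fixes P :: "rat^'d^'d"
  assumes "\<not> invertible P"
  shows "\<exists>v. v \<noteq> 0 \<and> P *v v = 0"
  using assms unfolding invertible_left_inverse matrix_left_invertible_ker by blast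

theorem theorem5p2:
  fixes P Q :: "rat ^'d ^'d"
  assumes "CARD('d) \<ge> 2"
  shows "irreducible_pair P Q \<longleftrightarrow>
           invertible P \<and> invertible Q \<and> irreducible (charpoly (matrix_inv P ** Q))"
proof
  assume ip: "irreducible_pair P Q"
  have invP: "invertible P"
  proof (rule ccontr)
    assume "\<not> invertible P"
    then obtain v where "v \<noteq> 0" "P *v v = 0" using invertible_ker by blast
    with sing[OF assms] ip show False by blast
  qed
  have invQ: "invertible Q"
  proof (rule ccontr)
    assume "\<not> invertible Q"
    then obtain v where "v \<noteq> 0" "Q *v v = 0" using invertible_ker by blast
    with sing[OF assms] ip show False by blast
  qed
  define A where "A = matrix_inv P ** Q"
  have noinv: "U = UNIV" if "vec.subspace U" "\<forall>x\<in>U. A *v x \<in> U" "U \<noteq> {0}" for U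
    using inv_sub[OF invP that(1) _ that(3)] that(2) ip unfolding A_def by blast
  obtain i :: 'd where True by blast
  define u :: "rat^'d" where "u = axis i 1"
  have u0: "u \<noteq> 0" unfolding u_def by (simp add: axis_eq_0_iff)
  obtain h where h: "h \<noteq> 0" "pe A h u = 0"
    using annih[of UNIV A u] by auto
  obtain p w where pw: "irreducible p" "p dvd h" "w \<noteq> 0" "pe A p w = 0"
    using irr_factor[OF h u0] by blast
  have pdvd: "p dvd charpoly A" by (rule key[OF pw(1) pw(4) pw(3)])
  have p0: "p \<noteq> 0" using pw(1) by (auto simp: irreducible_def)
  obtain W where W: "vec.subspace W" "\<forall>x\<in>W. A *v x \<in> W" "w \<in> W" "vec.dim W \<le> degree p"
    using krylov[OF pw(4) p0 pw(3)] by blast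
  have "W \<noteq> {0}" using W(3) pw(3) by auto
  hence "W = UNIV" using noinv W(1,2) by blast
  hence dp: "CARD('d) \<le> degree p" using W(4) dim_UNIV_cart[where 'a=rat and 'n='d] by simp
  from pdvd obtain r where r: "charpoly A = p * r" by (auto elim: dvdE)
  have dc: "degree (charpoly A) = CARD('d)" by (rule charpoly_degree)
  have c0: "charpoly A \<noteq> 0" using dc assms by auto
  have r0: "r \<noteq> 0" using r c0 by auto
  have "degree (charpoly A) = degree p + degree r" using r p0 r0 by (simp add: degree_mult_eq)
  hence "degree r = 0" using dc dp by simp
  hence ur: "is_unit r" using r0 by (simp add: is_unit_iff_degree)
  have "irreducible (charpoly A)"
    unfolding r using irreducible_mult_unit_left[OF ur, of p] pw(1) by (simp add: mult.commute)
  then show "invertible P \<and> invertible Q \<and> irreducible (charpoly (matrix_inv P ** Q))"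
    using invP invQ unfolding A_def by blast
next
  assume asm: "invertible P \<and> invertible Q \<and> irreducible (charpoly (matrix_inv P ** Q))"
  define A where "A = matrix_inv P ** Q"
  have irr: "irreducible (charpoly A)" using asm unfolding A_def by blast
  show "irreducible_pair P Q"
  proof (rule ccontr)
    assume "\<not> irreducible_pair P Q"
    then obtain U where U: "vec.subspace U" "\<forall>x\<in>U. A *v x \<in> U" "U \<noteq> {0}" "U \<noteq> UNIV"
      using ip_to_inv[of P Q] asm unfolding A_def by blast
    from U(1,3) obtain u where u: "u \<in> U" "u \<noteq> 0" by (auto simp: vec.subspace_def)
    obtain h where h: "h \<noteq> 0" "degree h \<le> vec.dim U" "pe A h u = 0"
      using annih[OF U(1) U(2) u(1)] by auto
    obtain p w where pw: "irreducible p" "p dvd h" "w \<noteq> 0" "pe A p w = 0"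
      using irr_factor[OF h(1) h(3) u(2)] by blast
    have pdvd: "p dvd charpoly A" by (rule key[OF pw(1) pw(4) pw(3)])
    have p0: "p \<noteq> 0" and pu: "\<not> is_unit p" using pw(1) by (auto simp: irreducible_def)
    have dU: "vec.dim U < CARD('d)"
    proof -
      have "vec.dim U \<le> CARD('d)"
        using vec.dim_subset_UNIV[of U] by (simp add: vec.dimension_def card_cart_basis)
      moreover have "vec.dim U \<noteq> CARD('d)"
      proof
        assume "vec.dim U = CARD('d)"
        hence "vec.span U = UNIV" using vec.dim_eq_full[of U] by (simp add: vec.dimension_def card_cart_basis)
        hence "U = UNIV" using U(1) vec.span_eq_iff[of U] by simp
        with U(4) show False by simp
      qed
      ultimately show ?thesis by simp
    qed
    have "degree p \<le> degree h" by (rule dvd_imp_degree_le[OF pw(2) h(1)])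
    hence dp: "degree p < CARD('d)" using h(2) dU by simp
    from pdvd obtain r where r: "charpoly A = p * r" by (auto elim: dvdE)
    have dc: "degree (charpoly A) = CARD('d)" by (rule charpoly_degree)
    have c0: "charpoly A \<noteq> 0" using dc assms by auto
    have r0: "r \<noteq> 0" using r c0 by auto
    have "degree (charpoly A) = degree p + degree r" using r p0 r0 by (simp add: degree_mult_eq)
    hence "degree r \<noteq> 0" using dc dp by simp
    hence ur: "\<not> is_unit r" using r0 by (simp add: is_unit_iff_degree)
    from irr r have "is_unit p \<or> is_unit r" by (auto simp: irreducible_def)
    with pu ur show False by blast
  qed
qed

end
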